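(* Let $\mathbf x_1,\ldots,\mathbf x_n\in\mathbb{R}^d\setminus\{\mathbf 0\}$ and suppose the probit likelihood $\ell(\beta)=\prod_{i=1}^n\Phi(\mathbf x_i^T\beta)$ has a unique global maximizer on $\mathbb{R}^d$. Let $\pi(\beta)\propto\ell(\beta)$ (flat prior) and let $P(\beta)=\sum_{j=1}^d a_j\beta_j$ be any first-degree polynomial. Then $\lim_{\rho\to\infty}\int_{\partial B_\rho}\pi\,\nabla P\cdot\mathbf n\,d\sigma=0$, where $B_\rho$ is the ball of radius $\rho$ centered at the origin; consequently the zero-variance estimator is unbiased: $\mathbb{E}_\pi[\mathbf a^T\mathbf z]=0$, where $\mathbf z=-\frac12\nabla\ln\pi$.
   Context: $\Phi$ is the standard normal c.d.f.; $\mathbf n$ is the outward unit normal to the sphere $\partial B_\rho$, $d\sigma$ the surface measure. For linear $P$ and $\psi=P\sqrt\pi$, $\frac{H\psi}{\sqrt\pi}=\mathbf a^T\mathbf z$ where $H=-\frac12\Delta+\frac{\Delta\sqrt\pi}{2\sqrt\pi}$. *)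

theory Defs
  imports "HOL-Analysis.Analysis" "HOL-Probability.Probability"
begin

definition Phi :: "real \<Rightarrow> real" where
  "Phi x = (LBINT t:{..x}. std_normal_density t)"

definition probit_lik :: "nat \<Rightarrow> (nat \<Rightarrow> real^'d) \<Rightarrow> real^'d \<Rightarrow> real" where
  "probit_lik n x \<beta> = (\<Prod>i<n. Phi (x i \<bullet> \<beta>))"

definition probit_post :: "nat \<Rightarrow> (nat \<Rightarrow> real^'d) \<Rightarrow> real^'d \<Rightarrow> real" where
  "probit_post n x \<beta> = probit_lik n x \<beta> / (\<integral>b. probit_lik n x b \<partial>lborel)"

definition grad :: "('a::real_inner \<Rightarrow> real) \<Rightarrow> 'a \<Rightarrow> 'a" where
  "grad f x = (THE D. GDERIV f x :> D)"

text \<open>Surface measure on the sphere of radius rho centred at 0, constructed as the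
  cone measure: push forward of (DIM * rho^(DIM-1)) times Lebesgue measure on the
  punctured unit ball under radial projection x \<mapsto> (rho / |x|) x.  For rho > 0 this is
  the (d-1)-dimensional surface (Hausdorff) measure on the sphere.\<close>
definition sphere_measure :: "real \<Rightarrow> ('a::euclidean_space) measure" where
  "sphere_measure \<rho> =
     distr (density (restrict_space lborel (ball 0 1 - {0}))
              (\<lambda>_. ennreal (real DIM('a) * \<rho> ^ (DIM('a) - 1))))
           borel (\<lambda>x. (\<rho> / norm x) *\<^sub>R x)"

definition sphere_integral :: "real \<Rightarrow> ('a::euclidean_space \<Rightarrow> real) \<Rightarrow> real" where
  "sphere_integral \<rho> f = (\<integral>y. f y \<partial>sphere_measure \<rho>)"

end

theory Submission
  imports Defs "HOL-Real_Asymp.Real_Asymp"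
begin

abbreviation phi :: "real \<Rightarrow> real" where "phi \<equiv> std_normal_density"

lemma phi_pos: "0 < phi t" by (simp add: normal_density_pos)
lemma phi_le1: "phi t \<le> 1"
proof -
  have "1 / sqrt (2*pi) \<le> 1" using pi_gt3 by (simp add: divide_le_eq real_le_rsqrt)
  moreover have "exp (- t\<^sup>2 / 2) \<le> 1" by simp
  ultimately show ?thesis unfolding std_normal_density_def
    by (metis exp_gt_zero less_eq_real_def mult_le_one zero_le_divide_1_iff real_sqrt_ge_zero zero_le_mult_iff)
qed
lemma phi_int: "integrable lborel phi" by simp
lemma phi_cont: "continuous_on S phi"
  unfolding std_normal_density_def by (intro continuous_intros) auto
lemma phi_deriv: "(phi has_real_derivative (- t * phi t)) (at t)"
  unfolding std_normal_density_def
  by (auto intro!: derivative_eq_intros simp: power2_eq_square field_simps)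

lemma phi_set_int: "set_integrable lborel S phi" if "S \<in> sets lborel"
  unfolding set_integrable_def using that by (intro integrable_mult_indicator) auto

lemma Phi_HK: "(phi has_integral Phi u) {..u}"
proof -
  have "set_integrable lborel {..u} phi" by (rule phi_set_int) auto
  from set_borel_integral_eq_integral[OF this] show ?thesis
    unfolding Phi_def by (metis has_integral_integral)
qed

lemma Phi_split: assumes "c \<le> u" shows "Phi u = Phi c + integral {c..u} phi"
proof -
  have i: "phi integrable_on {c..u}" using phi_cont integrable_continuous_interval by blast
  have "(phi has_integral (Phi c + integral {c..u} phi)) ({..c} \<union> {c..u})"
    by (rule has_integral_Un[OF Phi_HK integrable_integral[OF i]]) (auto intro: negligible_subset[of "{c}"])
  moreover have "{..c} \<union> {c..u} = {..u}" using assms by auto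
  ultimately show ?thesis using Phi_HK has_integral_unique by metis
qed

lemma Phi_deriv: "(Phi has_real_derivative phi t) (at t)"
proof -
  have "((\<lambda>u. integral {t-1..u} phi) has_real_derivative phi t) (at t within {t-1..t+1})"
    by (rule integral_has_real_derivative) (auto intro: phi_cont)
  then have "((\<lambda>u. Phi (t-1) + integral {t-1..u} phi) has_real_derivative phi t) (at t within {t-1..t+1})"
    by (auto intro!: derivative_eq_intros)
  then have "(Phi has_real_derivative phi t) (at t within {t-1..t+1})"
    by (rule has_field_derivative_transform_within[where d=1]) (auto simp: Phi_split)
  then show ?thesis by (simp add: at_within_Icc_at)
qed

lemma phi_ind_int: "integrable lborel (\<lambda>t. phi t * indicator S t)" if "S \<in> sets lborel"
  using integrable_mult_indicator[OF that phi_int] by (simp add: mult.commute)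

lemma Phi_nonneg: "0 \<le> Phi u"
  unfolding Phi_def set_lebesgue_integral_def by (rule integral_nonneg_AE) auto

lemma Phi_le1: "Phi u \<le> 1"
proof -
  have "Phi u = (\<integral>t. indicator {..u} t * phi t \<partial>lborel)" unfolding Phi_def set_lebesgue_integral_def by simp
  also have "\<dots> \<le> (\<integral>t. phi t \<partial>lborel)"
    using phi_ind_int[of "{..u}"] by (intro integral_mono phi_int) (auto simp: mult.commute indicator_def less_imp_le[OF phi_pos])
  finally show ?thesis by simp
qed

lemma Phi_mono: "u \<le> v \<Longrightarrow> Phi u \<le> Phi v"
  by (rule DERIV_nonneg_imp_nondecreasing) (auto intro: Phi_deriv less_imp_le[OF phi_pos])

lemma Phi_pos: "0 < Phi u"
proof -
  have "Phi (u-1) < Phi u"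
    by (rule DERIV_pos_imp_increasing) (auto intro: Phi_deriv phi_pos)
  then show ?thesis using Phi_nonneg[of "u-1"] by linarith
qed

lemma Phi_cdf: "Phi = cdf (density lborel phi)"
proof
  fix u
  have "emeasure (density lborel phi) {..u} = (\<integral>\<^sup>+t. ennreal (phi t * indicator {..u} t) \<partial>lborel)"
    by (subst emeasure_density) (auto intro!: nn_integral_cong simp: indicator_def)
  also have "\<dots> = ennreal (\<integral>t. phi t * indicator {..u} t \<partial>lborel)"
    by (rule nn_integral_eq_integral) (auto intro: phi_ind_int)
  finally show "Phi u = cdf (density lborel phi) u"
    unfolding cdf_def Phi_def set_lebesgue_integral_def measure_def
    by (simp add: mult.commute integral_nonneg_AE)
qed

lemma Phi_bot: "(Phi \<longlongrightarrow> 0) at_bot"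
proof -
  interpret real_distribution "density lborel phi"
    by (simp add: real_distribution_def real_distribution_axioms_def prob_space_normal_density)
  show ?thesis unfolding Phi_cdf by (rule cdf_lim_at_bot)
qed

lemma Phi_tail: assumes "m \<le> -1" shows "Phi m \<le> phi m"
proof -
  let ?g = "\<lambda>t. phi t - Phi t"
  have key: "phi x \<le> - (x * phi x)" if "x \<le> -1" for x
  proof -
    have "1 * phi x \<le> (-x) * phi x" using that by (intro mult_right_mono) (auto intro: less_imp_le[OF phi_pos])
    then show ?thesis by simp
  qed
  have mono: "?g y \<le> ?g m" if "y \<le> m" for y
    by (rule DERIV_nonneg_imp_nondecreasing[OF that])
      (auto intro!: exI derivative_eq_intros phi_deriv Phi_deriv
        intro: key simp: algebra_simps
        dest!: order.trans[OF _ assms])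
  have "(phi \<longlongrightarrow> 0) at_bot" unfolding std_normal_density_def
    by real_asymp
  then have "(?g \<longlongrightarrow> 0 - 0) at_bot" using Phi_bot by (intro tendsto_diff)
  then have lim: "(?g \<longlongrightarrow> 0) at_bot" by simp
  have "0 \<le> ?g m"
  proof (rule tendsto_le[OF _ tendsto_const lim])
    show "\<forall>\<^sub>F y in at_bot. ?g y \<le> ?g m" unfolding eventually_at_bot_linorder using mono by blast
  qed simp
  then show ?thesis by simp
qed

lemma Phi_gauss: assumes "m \<le> 0" shows "Phi m \<le> 2 * exp (- m\<^sup>2 / 2)"
proof (cases "m \<le> -1")
  case True
  then have "Phi m \<le> phi m" by (rule Phi_tail)
  also have "\<dots> \<le> exp (- m\<^sup>2 / 2)" unfolding std_normal_density_def
    using pi_gt3 by (auto simp: divide_le_eq real_le_rsqrt)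
  finally show ?thesis using exp_gt_zero[of "- m\<^sup>2 / 2"] by linarith
next
  case False
  then have "(-m)*(-m) \<le> 1*1" using assms by (intro mult_mono) auto
  then have "m\<^sup>2 \<le> 1" by (simp add: power2_eq_square)
  then have "exp (-1/2) \<le> exp (- m\<^sup>2 / 2)" by simp
  moreover have "1 \<le> 2 * exp (-1/2::real)"
  proof -
    have "exp (1/2::real) * exp (1/2) \<le> 2 * 2" using exp_le by (simp add: exp_add[symmetric])
    then have "exp (1/2::real)^2 \<le> 2^2" by (simp add: power2_eq_square)
    then have "exp (1/2::real) \<le> 2" by (rule power2_le_imp_le) simp
    then show ?thesis by (simp add: exp_minus field_simps)
  qed
  ultimately show ?thesis using Phi_le1[of m] by linarith
qed


lemma lik_nonneg: "0 \<le> probit_lik n x b"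
  unfolding probit_lik_def by (intro prod_nonneg) (auto intro: Phi_nonneg)
lemma lik_pos: "0 < probit_lik n x b"
  unfolding probit_lik_def by (intro prod_pos) (auto intro: Phi_pos)

lemma neg_dir:
  assumes uniq: "\<exists>!b. \<forall>\<beta>. probit_lik n x \<beta> \<le> probit_lik n x b"
    and v: "v \<noteq> 0"
  shows "\<exists>i<n. x i \<bullet> v < 0"
proof (rule ccontr)
  assume "\<not> ?thesis"
  then have ge: "\<And>i. i < n \<Longrightarrow> 0 \<le> x i \<bullet> v" by (metis not_less)
  from uniq obtain b0 where b0: "\<forall>\<beta>. probit_lik n x \<beta> \<le> probit_lik n x b0"
    and u: "\<And>b. \<forall>\<beta>. probit_lik n x \<beta> \<le> probit_lik n x b \<Longrightarrow> b = b0" by blast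
  have "probit_lik n x b0 \<le> probit_lik n x (b0 + v)"
    unfolding probit_lik_def
    by (intro prod_mono) (auto intro!: Phi_nonneg Phi_mono simp: inner_add_right ge)
  then have "\<forall>\<beta>. probit_lik n x \<beta> \<le> probit_lik n x (b0 + v)" using b0 order.trans by blast
  then have "b0 + v = b0" by (rule u)
  then show False using v by simp
qed

lemma unit_exists: "\<exists>v::real^'d. norm v = 1"
  by (rule exI[of _ "axis undefined 1"]) simp

lemma decay_dir:
  fixes x :: "nat \<Rightarrow> real^'d"
  assumes uniq: "\<exists>!b. \<forall>\<beta>. probit_lik n x \<beta> \<le> probit_lik n x b"
  shows "\<exists>c>0. \<forall>\<beta>. \<exists>i<n. x i \<bullet> \<beta> \<le> - c * norm \<beta>"
proof -
  obtain v0 :: "real^'d" where "norm v0 = 1" using unit_exists by blast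
  then have "v0 \<noteq> 0" by auto
  from neg_dir[OF uniq this] have n0: "0 < n" by auto
  define h where "h v = (\<Sum>i<n. min 0 (x i \<bullet> v))" for v :: "real^'d"
  have hc: "continuous_on (sphere 0 1) h" unfolding h_def by (intro continuous_intros)
  obtain w where w: "w \<in> sphere 0 1" and wmax: "\<And>y. y \<in> sphere 0 1 \<Longrightarrow> h y \<le> h w"
    using continuous_attains_sup[OF compact_sphere _ hc] \<open>norm v0 = 1\<close> by fastforce
  have "w \<noteq> 0" using w by auto
  from neg_dir[OF uniq this] obtain j where j: "j < n" "x j \<bullet> w < 0" by blast
  have "h w < 0"
  proof -
    have "h w = (\<Sum>i\<in>{..<n}-{j}. min 0 (x i \<bullet> w)) + min 0 (x j \<bullet> w)"
      unfolding h_def using j by (subst sum.remove[of _ j]) auto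
    moreover have "(\<Sum>i\<in>{..<n}-{j}. min 0 (x i \<bullet> w)) \<le> 0" by (intro sum_nonpos) auto
    ultimately show ?thesis using j by simp
  qed
  define c where "c = - h w / n"
  have cpos: "c > 0" unfolding c_def using \<open>h w < 0\<close> n0 by (simp add: divide_neg_pos)
  have unit: "\<exists>i<n. x i \<bullet> v \<le> - c" if "norm v = 1" for v
  proof (rule ccontr)
    assume "\<not> ?thesis"
    then have "\<And>i. i \<in> {..<n} \<Longrightarrow> (\<lambda>_. - c) i < min 0 (x i \<bullet> v)" using cpos by auto
    then have "(\<Sum>i<n. (\<lambda>_. - c) i) < h v" unfolding h_def using n0 by (intro sum_strict_mono) auto
    moreover have "(\<Sum>i<n. (\<lambda>_. - c) i) = h w" unfolding c_def using n0 by simp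
    moreover have "h v \<le> h w" using wmax that by simp
    ultimately show False by simp
  qed
  have "\<exists>i<n. x i \<bullet> \<beta> \<le> - c * norm \<beta>" for \<beta>
  proof (cases "\<beta> = 0")
    case True then show ?thesis using n0 by auto
  next
    case False
    then obtain i where i: "i < n" "x i \<bullet> (\<beta> /\<^sub>R norm \<beta>) \<le> - c" using unit[of "\<beta> /\<^sub>R norm \<beta>"] by auto
    then have le: "norm \<beta> * (x i \<bullet> (\<beta> /\<^sub>R norm \<beta>)) \<le> norm \<beta> * (- c)" by (intro mult_left_mono) auto
    have eq: "norm \<beta> * (x i \<bullet> (\<beta> /\<^sub>R norm \<beta>)) = x i \<bullet> \<beta>" using False by (simp add: inner_scaleR_right)
    from le[unfolded eq] have "x i \<bullet> \<beta> \<le> - c * norm \<beta>" by (simp add: algebra_simps)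
    then show ?thesis using i by blast
  qed
  then show ?thesis using cpos by blast
qed


lemma gauss1_int: assumes "0 < \<alpha>" shows "integrable lborel (\<lambda>t::real. exp (- \<alpha> * t\<^sup>2))"
proof -
  define \<sigma> where "\<sigma> = sqrt (1 / (2 * \<alpha>))"
  have sp: "0 < \<sigma>" unfolding \<sigma>_def using assms by simp
  have s2: "\<sigma>\<^sup>2 = 1 / (2 * \<alpha>)" unfolding \<sigma>_def using assms by simp
  have "integrable lborel (\<lambda>t. sqrt (2 * pi * \<sigma>\<^sup>2) * normal_density 0 \<sigma> t)"
    using integrable_normal_density[where \<mu>=0 and \<sigma>=\<sigma>] sp by (intro integrable_mult_right) auto
  moreover have "sqrt (2 * pi * \<sigma>\<^sup>2) * normal_density 0 \<sigma> t = exp (- \<alpha> * t\<^sup>2)" for t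
    unfolding normal_density_def using sp assms by (simp add: s2 field_simps)
  ultimately show ?thesis by simp
qed

lemma gauss_int:
  assumes "0 < \<alpha>"
  shows "integrable lborel (\<lambda>\<beta>::'a::euclidean_space. exp (- \<alpha> * (norm \<beta>)\<^sup>2))"
proof (rule integrableI_bounded)
  show "(\<lambda>\<beta>::'a. exp (- \<alpha> * (norm \<beta>)\<^sup>2)) \<in> borel_measurable lborel" by measurable
  have eq: "exp (- \<alpha> * (norm \<beta>)\<^sup>2) = (\<Prod>b\<in>Basis. exp (- \<alpha> * (\<beta> \<bullet> b)\<^sup>2))" for \<beta> :: 'a
  proof -
    have "(norm \<beta>)\<^sup>2 = (\<Sum>b\<in>Basis. (\<beta> \<bullet> b)\<^sup>2)"
      unfolding power2_norm_eq_inner by (subst euclidean_inner) (simp add: power2_eq_square)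
    then show ?thesis by (simp add: exp_sum[symmetric] sum_distrib_left)
  qed
  have eq': "exp (- (\<alpha> * (norm \<beta>)\<^sup>2)) = (\<Prod>b\<in>Basis. exp (- (\<alpha> * (\<beta> \<bullet> b)\<^sup>2)))" for \<beta> :: 'a
    using eq[of \<beta>] by simp
  define K where "K = (\<integral>t. exp (- \<alpha> * t\<^sup>2) \<partial>lborel)"
  have K1: "(\<integral>\<^sup>+t. ennreal (exp (- \<alpha> * t\<^sup>2)) \<partial>lborel) = ennreal K"
    unfolding K_def by (rule nn_integral_eq_integral[OF gauss1_int[OF assms]]) auto
  have "(\<integral>\<^sup>+\<beta>. ennreal (norm (exp (- \<alpha> * (norm (\<beta>::'a))\<^sup>2))) \<partial>lborel)
      = (\<integral>\<^sup>+\<beta>. (\<Prod>b\<in>Basis. ennreal (exp (- \<alpha> * ((\<beta>::'a) \<bullet> b)\<^sup>2))) \<partial>lborel)"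
    by (auto simp: eq' prod_ennreal abs_prod intro!: nn_integral_cong)
  also have "\<dots> = (\<Prod>b\<in>(Basis::'a set). (\<integral>\<^sup>+t. ennreal (exp (- \<alpha> * t\<^sup>2)) \<partial>lborel))"
    by (rule nn_integral_lborel_prod) auto
  also have "\<dots> = ennreal (K ^ DIM('a))"
    unfolding K1 by (simp add: K_def integral_nonneg_AE ennreal_power)
  finally show "(\<integral>\<^sup>+\<beta>. ennreal (norm (exp (- \<alpha> * (norm (\<beta>::'a))\<^sup>2))) \<partial>lborel) < \<infinity>" by simp
qed


lemma Phi_isCont: "isCont Phi t" using Phi_deriv DERIV_isCont by blast
lemma continuous_on_Phi[continuous_intros]: "continuous_on S f \<Longrightarrow> continuous_on S (\<lambda>y. Phi (f y))"
  by (rule continuous_on_compose2[of UNIV Phi]) (auto intro: continuous_at_imp_continuous_on Phi_isCont)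
lemma continuous_on_phi[continuous_intros]: "continuous_on S f \<Longrightarrow> continuous_on S (\<lambda>y. phi (f y))"
  by (rule continuous_on_compose2[of UNIV phi]) (auto intro: phi_cont)

definition Dlik :: "nat \<Rightarrow> (nat \<Rightarrow> real^'d) \<Rightarrow> real^'d \<Rightarrow> real^'d" where
  "Dlik n x \<beta> = (\<Sum>i<n. (phi (x i \<bullet> \<beta>) * (\<Prod>j\<in>{..<n}-{i}. Phi (x j \<bullet> \<beta>))) *\<^sub>R x i)"

lemma lik_cont: "continuous_on S (probit_lik n x)"
  unfolding probit_lik_def by (intro continuous_intros)
lemma Dlik_cont: "continuous_on S (Dlik n x)"
  unfolding Dlik_def by (intro continuous_intros)

lemma lik_meas[measurable]: "probit_lik n x \<in> borel_measurable borel"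
  by (rule borel_measurable_continuous_onI[OF lik_cont])
lemma Dlik_meas[measurable]: "Dlik n x \<in> borel_measurable borel"
  by (rule borel_measurable_continuous_onI[OF Dlik_cont])

lemma lik_gderiv: "GDERIV (probit_lik n x) \<beta> :> Dlik n x \<beta>"
proof -
  have d: "((\<lambda>b. Phi (x i \<bullet> b)) has_derivative (\<lambda>y. (x i \<bullet> y) * phi (x i \<bullet> \<beta>))) (at \<beta>)" for i
    by (rule DERIV_compose_FDERIV[OF Phi_deriv]) (auto intro!: derivative_eq_intros)
  show ?thesis unfolding gderiv_def probit_lik_def
    by (rule has_derivative_eq_rhs[OF has_derivative_prod[OF d]])
      (auto simp: Dlik_def inner_sum_right inner_commute fun_eq_iff algebra_simps)
qed

lemma gderiv_unique: assumes "GDERIV f b :> D1" "GDERIV f b :> D2" shows "D1 = D2"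
proof -
  have "(\<lambda>h. h \<bullet> D1) = (\<lambda>h. h \<bullet> D2)"
    using assms unfolding gderiv_def by (rule has_derivative_unique)
  then have "(D1 - D2) \<bullet> D1 = (D1 - D2) \<bullet> D2" by metis
  then have "(D1 - D2) \<bullet> (D1 - D2) = 0" by (simp add: inner_diff_right)
  then show ?thesis by simp
qed

lemma grad_eq: "GDERIV f b :> D \<Longrightarrow> grad f b = D"
  unfolding grad_def using gderiv_unique by blast


lemma phi_le_exp: "phi m \<le> exp (- m\<^sup>2 / 2)"
  unfolding std_normal_density_def using pi_gt3 by (auto simp: divide_le_eq real_le_rsqrt)

context
  fixes n :: nat and x :: "nat \<Rightarrow> real^'d" and c :: real
  assumes cpos: "0 < c" and H: "\<And>\<beta>. \<exists>i<n. x i \<bullet> \<beta> \<le> - c * norm \<beta>"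
begin

lemma expb: assumes "m \<le> - c * norm \<beta>" shows "exp (- m\<^sup>2 / 2) \<le> exp (- (c\<^sup>2/2) * (norm \<beta>)\<^sup>2)"
proof -
  have "0 \<le> c * norm \<beta>" using cpos by simp
  then have "(c * norm \<beta>)\<^sup>2 \<le> (- m)\<^sup>2" using assms by (intro power_mono) auto
  then show ?thesis by (simp add: power_mult_distrib)
qed

lemma Phib: assumes "m \<le> - c * norm \<beta>" shows "Phi m \<le> 2 * exp (- (c\<^sup>2/2) * (norm \<beta>)\<^sup>2)"
proof -
  have "0 \<le> c * norm \<beta>" using cpos by simp
  then have "m \<le> 0" using assms by linarith
  then have "Phi m \<le> 2 * exp (- m\<^sup>2 / 2)" by (rule Phi_gauss)
  also have "\<dots> \<le> 2 * exp (- (c\<^sup>2/2) * (norm \<beta>)\<^sup>2)" using expb[OF assms] by simp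
  finally show ?thesis .
qed

lemma prod_rest_le1: "(\<Prod>j\<in>A. Phi (x j \<bullet> \<beta>)) \<le> 1"
  by (intro prod_le_1) (auto intro: Phi_nonneg Phi_le1)

lemma lik_le: "probit_lik n x \<beta> \<le> 2 * exp (- (c\<^sup>2/2) * (norm \<beta>)\<^sup>2)"
proof -
  obtain i where i: "i < n" "x i \<bullet> \<beta> \<le> - c * norm \<beta>" using H by blast
  have "probit_lik n x \<beta> = Phi (x i \<bullet> \<beta>) * (\<Prod>j\<in>{..<n}-{i}. Phi (x j \<bullet> \<beta>))"
    unfolding probit_lik_def using i by (subst prod.remove[of _ i]) auto
  also have "\<dots> \<le> Phi (x i \<bullet> \<beta>) * 1"
    by (intro mult_left_mono prod_rest_le1 Phi_nonneg)
  also have "\<dots> \<le> 2 * exp (- (c\<^sup>2/2) * (norm \<beta>)\<^sup>2)" using Phib[OF i(2)] by simp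
  finally show ?thesis .
qed

lemma term_le:
  assumes "i < n"
  shows "phi (x i \<bullet> \<beta>) * (\<Prod>j\<in>{..<n}-{i}. Phi (x j \<bullet> \<beta>)) \<le> 2 * exp (- (c\<^sup>2/2) * (norm \<beta>)\<^sup>2)"
proof -
  obtain k where k: "k < n" "x k \<bullet> \<beta> \<le> - c * norm \<beta>" using H by blast
  show ?thesis
  proof (cases "k = i")
    case True
    have "phi (x i \<bullet> \<beta>) * (\<Prod>j\<in>{..<n}-{i}. Phi (x j \<bullet> \<beta>)) \<le> phi (x i \<bullet> \<beta>) * 1"
      by (intro mult_left_mono prod_rest_le1) (auto intro: less_imp_le[OF phi_pos])
    also have "\<dots> \<le> exp (- (x i \<bullet> \<beta>)\<^sup>2 / 2)" using phi_le_exp by simp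
    also have "\<dots> \<le> exp (- (c\<^sup>2/2) * (norm \<beta>)\<^sup>2)" using expb k True by simp
    finally have "phi (x i \<bullet> \<beta>) * (\<Prod>j\<in>{..<n}-{i}. Phi (x j \<bullet> \<beta>)) \<le> exp (- (c\<^sup>2/2) * (norm \<beta>)\<^sup>2)" .
    then show ?thesis using exp_gt_zero[of "- (c\<^sup>2/2) * (norm \<beta>)\<^sup>2"] by linarith
  next
    case False
    have "(\<Prod>j\<in>{..<n}-{i}. Phi (x j \<bullet> \<beta>)) = Phi (x k \<bullet> \<beta>) * (\<Prod>j\<in>{..<n}-{i}-{k}. Phi (x j \<bullet> \<beta>))"
      using k False by (subst prod.remove[of _ k]) auto
    also have "\<dots> \<le> Phi (x k \<bullet> \<beta>) * 1" by (intro mult_left_mono prod_rest_le1 Phi_nonneg)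
    finally have p: "(\<Prod>j\<in>{..<n}-{i}. Phi (x j \<bullet> \<beta>)) \<le> Phi (x k \<bullet> \<beta>)" by simp
    have "phi (x i \<bullet> \<beta>) * (\<Prod>j\<in>{..<n}-{i}. Phi (x j \<bullet> \<beta>)) \<le> 1 * Phi (x k \<bullet> \<beta>)"
      using p by (intro mult_mono phi_le1) (auto intro: prod_nonneg Phi_nonneg)
    also have "\<dots> \<le> 2 * exp (- (c\<^sup>2/2) * (norm \<beta>)\<^sup>2)" using Phib[OF k(2)] by simp
    finally show ?thesis .
  qed
qed

lemma Dlik_norm: "norm (Dlik n x \<beta>) \<le> (\<Sum>i<n. norm (x i)) * (2 * exp (- (c\<^sup>2/2) * (norm \<beta>)\<^sup>2))"
proof -
  have "norm (Dlik n x \<beta>) \<le> (\<Sum>i<n. norm ((phi (x i \<bullet> \<beta>) * (\<Prod>j\<in>{..<n}-{i}. Phi (x j \<bullet> \<beta>))) *\<^sub>R x i))"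
    unfolding Dlik_def by (rule norm_sum)
  also have "\<dots> \<le> (\<Sum>i<n. norm (x i) * (2 * exp (- (c\<^sup>2/2) * (norm \<beta>)\<^sup>2)))"
  proof (intro sum_mono)
    fix i assume "i \<in> {..<n}"
    then have t: "phi (x i \<bullet> \<beta>) * (\<Prod>j\<in>{..<n}-{i}. Phi (x j \<bullet> \<beta>)) \<le> 2 * exp (- (c\<^sup>2/2) * (norm \<beta>)\<^sup>2)"
      by (intro term_le) auto
    have nn: "0 \<le> phi (x i \<bullet> \<beta>) * (\<Prod>j\<in>{..<n}-{i}. Phi (x j \<bullet> \<beta>))"
      by (intro mult_nonneg_nonneg prod_nonneg) (auto intro: Phi_nonneg less_imp_le[OF phi_pos])
    show "norm ((phi (x i \<bullet> \<beta>) * (\<Prod>j\<in>{..<n}-{i}. Phi (x j \<bullet> \<beta>))) *\<^sub>R x i)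
        \<le> norm (x i) * (2 * exp (- (c\<^sup>2/2) * (norm \<beta>)\<^sup>2))"
      using t nn by (simp add: mult.commute mult_left_mono)
  qed
  also have "\<dots> = (\<Sum>i<n. norm (x i)) * (2 * exp (- (c\<^sup>2/2) * (norm \<beta>)\<^sup>2))"
    by (simp add: sum_distrib_right)
  finally show ?thesis .
qed

end

lemma line_deriv:
  "((\<lambda>t. probit_lik n x (\<beta> + t *\<^sub>R a)) has_real_derivative (a \<bullet> Dlik n x (\<beta> + s *\<^sub>R a))) (at s)"
proof -
  have l: "((\<lambda>t. \<beta> + t *\<^sub>R a) has_derivative (\<lambda>t. t *\<^sub>R a)) (at s)"
    by (auto intro!: derivative_eq_intros)
  have g: "(probit_lik n x has_derivative (\<lambda>h. h \<bullet> Dlik n x (\<beta> + s *\<^sub>R a))) (at (\<beta> + s *\<^sub>R a))"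
    using lik_gderiv unfolding gderiv_def .
  show ?thesis unfolding has_field_derivative_def
    by (rule has_derivative_eq_rhs[OF has_derivative_compose[OF l g]]) (auto simp: fun_eq_iff mult.commute)
qed

lemma shift_bound:
  fixes \<beta> a :: "real^'d"
  assumes "\<bar>z\<bar> \<le> 1" "0 \<le> k"
  shows "exp (- k * (norm (\<beta> + z *\<^sub>R a))\<^sup>2) \<le> exp (k * (norm a)\<^sup>2) * exp (- (k/2) * (norm \<beta>)\<^sup>2)"
proof -
  have za: "norm (z *\<^sub>R a) \<le> norm a" using assms by (simp add: mult_left_le_one_le)
  have "norm \<beta> \<le> norm (\<beta> + z *\<^sub>R a) + norm (z *\<^sub>R a)"
    using norm_triangle_ineq4[of "\<beta> + z *\<^sub>R a" "z *\<^sub>R a"] by simp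
  then have t: "norm \<beta> \<le> norm (\<beta> + z *\<^sub>R a) + norm a" using za by linarith
  have "(norm \<beta>)\<^sup>2 \<le> (norm (\<beta> + z *\<^sub>R a) + norm a)\<^sup>2" using t by (intro power_mono) auto
  also have "\<dots> \<le> 2 * (norm (\<beta> + z *\<^sub>R a))\<^sup>2 + 2 * (norm a)\<^sup>2"
    using sum_squares_ge_zero[of "norm (\<beta> + z *\<^sub>R a) - norm a" 0] by (simp add: power2_eq_square algebra_simps)
  finally have "(norm \<beta>)\<^sup>2 \<le> 2 * (norm (\<beta> + z *\<^sub>R a))\<^sup>2 + 2 * (norm a)\<^sup>2" .
  then have "k * (norm \<beta>)\<^sup>2 \<le> k * (2 * (norm (\<beta> + z *\<^sub>R a))\<^sup>2 + 2 * (norm a)\<^sup>2)"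
    using assms by (intro mult_left_mono) auto
  then have "- k * (norm (\<beta> + z *\<^sub>R a))\<^sup>2 \<le> k * (norm a)\<^sup>2 + (- (k/2) * (norm \<beta>)\<^sup>2)"
    by (simp add: algebra_simps)
  then show ?thesis by (simp add: exp_add[symmetric])
qed

context
  fixes n :: nat and x :: "nat \<Rightarrow> real^'d" and c :: real
  assumes cpos: "0 < c" and H: "\<And>\<beta>. \<exists>i<n. x i \<bullet> \<beta> \<le> - c * norm \<beta>"
begin

lemma lik_int: "integrable lborel (probit_lik n x)"
proof -
  have I: "integrable lborel (\<lambda>\<beta>::real^'d. 2 * exp (- (c\<^sup>2/2) * (norm \<beta>)\<^sup>2))"
    using gauss_int[of "c\<^sup>2/2"] cpos by (intro integrable_mult_right) auto
  have "AE \<beta> in lborel. norm (probit_lik n x \<beta>) \<le> norm (2 * exp (- (c\<^sup>2/2) * (norm \<beta>)\<^sup>2))"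
    using lik_le[OF cpos H] by (intro AE_I2) (simp add: abs_of_nonneg lik_nonneg)
  then show ?thesis using Bochner_Integration.integrable_bound[OF I, of "probit_lik n x"] by simp
qed

lemma zero_int:
  fixes a :: "real^'d"
  shows "integrable lborel (\<lambda>\<beta>. a \<bullet> Dlik n x \<beta>) \<and> (\<integral>\<beta>. a \<bullet> Dlik n x \<beta> \<partial>lborel) = 0"
proof -
  let ?L = "probit_lik n x"
  define h where "h k = inverse (real (Suc k))" for k
  define s where "s k \<beta> = (?L (\<beta> + h k *\<^sub>R a) - ?L \<beta>) / h k" for k \<beta>
  define M where "M = norm a * (\<Sum>i<n. norm (x i)) * 2 * exp (c\<^sup>2/2 * (norm a)\<^sup>2)"
  define w where "w \<beta> = M * exp (- (c\<^sup>2/4) * (norm \<beta>)\<^sup>2)" for \<beta> :: "real^'d"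
  have hpos: "0 < h k" "h k \<le> 1" for k unfolding h_def by (auto simp: field_simps)
  have shift: "(\<integral>\<beta>. ?L (\<beta> + t *\<^sub>R a) \<partial>lborel) = (\<integral>\<beta>. ?L \<beta> \<partial>lborel)
      \<and> integrable lborel (\<lambda>\<beta>. ?L (\<beta> + t *\<^sub>R a))" for t
  proof -
    have d: "distr lborel borel ((+) (t *\<^sub>R a)) = lborel" by (rule lborel_distr_plus)
    have "(\<integral>\<beta>. ?L \<beta> \<partial>lborel) = (\<integral>\<beta>. ?L (t *\<^sub>R a + \<beta>) \<partial>lborel)"
      by (subst d[symmetric], subst integral_distr) auto
    moreover have "integrable lborel (\<lambda>\<beta>. ?L (t *\<^sub>R a + \<beta>))"
    proof -
      have "integrable (distr lborel borel ((+) (t *\<^sub>R a))) ?L" using d lik_int by simp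
      then show ?thesis using integrable_distr_eq[of "(+) (t *\<^sub>R a)" lborel borel ?L] by simp
    qed
    ultimately show ?thesis by (simp add: add.commute)
  qed
  have s0: "integral\<^sup>L lborel (s k) = 0" for k
    unfolding s_def using shift[of "h k"] lik_int by (simp add: integral_diff)
  have meas_s: "s k \<in> borel_measurable lborel" for k unfolding s_def by measurable
  have meas_g: "(\<lambda>\<beta>. a \<bullet> Dlik n x \<beta>) \<in> borel_measurable lborel" by measurable
  have w_int: "integrable lborel w" unfolding w_def
    using gauss_int[of "c\<^sup>2/4"] cpos by (intro integrable_mult_right) auto
  have lim: "(\<lambda>k. s k \<beta>) \<longlonglongrightarrow> a \<bullet> Dlik n x \<beta>" for \<beta>
  proof -
    have "((\<lambda>t. (?L (\<beta> + t *\<^sub>R a) - ?L (\<beta> + 0 *\<^sub>R a)) / (t - 0)) \<longlongrightarrow> a \<bullet> Dlik n x (\<beta> + 0 *\<^sub>R a)) (at 0)"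
      using line_deriv[of n x \<beta> a 0] unfolding has_field_derivative_iff .
    moreover have "filterlim h (at 0) sequentially"
      unfolding filterlim_at h_def using LIMSEQ_inverse_real_of_nat by auto
    ultimately have "((\<lambda>t. (?L (\<beta> + t *\<^sub>R a) - ?L (\<beta> + 0 *\<^sub>R a)) / (t - 0)) \<circ> h) \<longlonglongrightarrow> a \<bullet> Dlik n x (\<beta> + 0 *\<^sub>R a)"
      by (rule filterlim_compose[unfolded o_def[symmetric]])
    then show ?thesis by (simp add: s_def o_def)
  qed
  have bound: "norm (s k \<beta>) \<le> w \<beta>" for k \<beta>
  proof -
    obtain z where z: "0 < z" "z < h k" "?L (\<beta> + h k *\<^sub>R a) - ?L (\<beta> + 0 *\<^sub>R a) = (h k - 0) * (a \<bullet> Dlik n x (\<beta> + z *\<^sub>R a))"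
      using MVT2[OF hpos(1)[of k], of "\<lambda>t. ?L (\<beta> + t *\<^sub>R a)" "\<lambda>s. a \<bullet> Dlik n x (\<beta> + s *\<^sub>R a)"] line_deriv
      by blast
    have "s k \<beta> = a \<bullet> Dlik n x (\<beta> + z *\<^sub>R a)" unfolding s_def using z(3) hpos[of k] by simp
    then have "norm (s k \<beta>) \<le> norm a * norm (Dlik n x (\<beta> + z *\<^sub>R a))"
      by (simp add: Cauchy_Schwarz_ineq2)
    also have "\<dots> \<le> norm a * ((\<Sum>i<n. norm (x i)) * (2 * exp (- (c\<^sup>2/2) * (norm (\<beta> + z *\<^sub>R a))\<^sup>2)))"
      by (intro mult_left_mono Dlik_norm[OF cpos H]) auto
    also have "\<dots> \<le> norm a * ((\<Sum>i<n. norm (x i)) * (2 * (exp (c\<^sup>2/2 * (norm a)\<^sup>2) * exp (- (c\<^sup>2/2/2) * (norm \<beta>)\<^sup>2))))"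
      using z hpos[of k] by (intro mult_left_mono shift_bound) (auto intro: sum_nonneg)
    also have "\<dots> = w \<beta>" unfolding w_def M_def by (simp add: algebra_simps)
    finally show ?thesis .
  qed
  have bound': "AE \<beta> in lborel. norm (s k \<beta>) \<le> w \<beta>" for k by (intro AE_I2 bound)
  have lim': "AE \<beta> in lborel. (\<lambda>k. s k \<beta>) \<longlonglongrightarrow> a \<bullet> Dlik n x \<beta>" by (intro AE_I2 lim)
  have "integrable lborel (\<lambda>\<beta>. a \<bullet> Dlik n x \<beta>)"
    by (rule integrable_dominated_convergence[OF meas_g meas_s w_int lim' bound'])
  moreover have "(\<lambda>k. integral\<^sup>L lborel (s k)) \<longlonglongrightarrow> (\<integral>\<beta>. a \<bullet> Dlik n x \<beta> \<partial>lborel)"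
    by (rule integral_dominated_convergence[OF meas_g meas_s w_int lim' bound'])
  then have "(\<integral>\<beta>. a \<bullet> Dlik n x \<beta> \<partial>lborel) = 0"
    unfolding s0 using LIMSEQ_unique tendsto_const by blast
  ultimately show ?thesis by blast
qed

end

lemma sphere_bound:
  fixes f :: "'a::euclidean_space \<Rightarrow> real"
  assumes rho: "0 < \<rho>" and B: "0 \<le> B" and fb: "\<And>z. norm z = \<rho> \<Longrightarrow> \<bar>f z\<bar> \<le> B"
  shows "\<bar>sphere_integral \<rho> f\<bar> \<le> B * (real DIM('a) * \<rho> ^ (DIM('a) - 1)) * measure lborel (ball (0::'a) 1 - {0})"
proof -
  define S :: "'a set" where "S = ball 0 1 - {0}"
  define K where "K = real DIM('a) * \<rho> ^ (DIM('a) - 1)"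
  define N where "N = density (restrict_space lborel S) (\<lambda>_. ennreal K)"
  define T :: "'a \<Rightarrow> 'a" where "T y = (\<rho> / norm y) *\<^sub>R y" for y
  define V where "V = measure lborel S"
  have Kpos: "0 \<le> K" unfolding K_def using rho by simp
  have Vpos: "0 \<le> V" unfolding V_def by simp
  have si: "sphere_integral \<rho> f = integral\<^sup>L (distr N borel T) f"
    unfolding sphere_integral_def sphere_measure_def N_def T_def S_def K_def ..
  have Sset: "S \<in> sets lborel" unfolding S_def by simp
  have sN: "sets N = sets (restrict_space lborel S)" unfolding N_def by simp
  have spN: "space N = S" unfolding N_def by (simp add: space_restrict_space)
  have Tm: "T \<in> measurable N borel"
    unfolding measurable_cong_sets[OF sN refl] T_def
    by (rule measurable_restrict_space1) measurable
  have bS: "bounded S" unfolding S_def by (rule bounded_subset[OF bounded_ball]) auto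
  have emS: "emeasure lborel S = ennreal V"
    unfolding V_def by (rule emeasure_eq_ennreal_measure)
      (use emeasure_bounded_finite[OF bS] in auto)
  have emN: "emeasure N (space N) = ennreal (K * V)"
  proof -
    have "emeasure N (space N) = ennreal K * emeasure (restrict_space lborel S) S"
      unfolding N_def spN[unfolded N_def]
      by (rule emeasure_density_const) (use sets.top[of "restrict_space lborel S"] in \<open>simp add: space_restrict_space\<close>)
    also have "emeasure (restrict_space lborel S) S = emeasure lborel S"
      by (rule emeasure_restrict_space) (use Sset in auto)
    finally show ?thesis using emS Kpos Vpos by (simp add: ennreal_mult)
  qed
  show ?thesis
  proof (cases "integrable (distr N borel T) f")
    case False
    then show ?thesis unfolding si using B Kpos Vpos
      by (simp add: not_integrable_integral_eq S_def K_def V_def)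
  next
    case True
    then have fm: "f \<in> borel_measurable borel"
      using borel_measurable_integrable[OF True] by (simp add: measurable_cong_sets[OF sets_distr refl])
    have "ennreal (norm (integral\<^sup>L (distr N borel T) f)) \<le> (\<integral>\<^sup>+z. norm (f z) \<partial>distr N borel T)"
      using integral_norm_bound_ennreal[OF True] by simp
    also have "\<dots> = (\<integral>\<^sup>+y. norm (f (T y)) \<partial>N)"
      by (rule nn_integral_distr[OF Tm]) (use fm in measurable)
    also have "\<dots> \<le> (\<integral>\<^sup>+y. ennreal B \<partial>N)"
    proof (rule nn_integral_mono)
      fix y assume "y \<in> space N"
      then have "y \<noteq> 0" unfolding spN S_def by auto
      then have "norm (T y) = \<rho>" unfolding T_def using rho by simp
      then show "ennreal (norm (f (T y))) \<le> ennreal B" using fb by (simp add: ennreal_leI)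
    qed
    also have "\<dots> = ennreal (B * (K * V))" using emN B Kpos Vpos by (simp add: ennreal_mult)
    finally have "norm (integral\<^sup>L (distr N borel T) f) \<le> B * (K * V)"
      using B Kpos Vpos by (simp add: ennreal_le_iff)
    then show ?thesis unfolding si K_def V_def S_def by (simp add: mult.assoc)
  qed
qed


lemma rho_lim: "0 < (k::real) \<Longrightarrow> ((\<lambda>r::real. r ^ m * exp (- k * r^2)) \<longlongrightarrow> 0) at_top"
  by real_asymp

theorem mainTheorem7:
  fixes n :: nat and x :: "nat \<Rightarrow> real^'d" and a :: "real^'d"
  assumes nz: "\<And>i. i < n \<Longrightarrow> x i \<noteq> 0"
    and uniq: "\<exists>!b. \<forall>\<beta>. probit_lik n x \<beta> \<le> probit_lik n x b"
  shows "integrable lborel (probit_lik n x)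
     \<and> ((\<lambda>\<rho>. sphere_integral \<rho>
            (\<lambda>\<beta>. probit_post n x \<beta> * (a \<bullet> (\<beta> /\<^sub>R norm \<beta>)))) \<longlongrightarrow> 0) at_top
     \<and> (\<forall>\<beta>. \<exists>D. GDERIV (\<lambda>b. ln (probit_post n x b)) \<beta> :> D)
     \<and> integrable lborel (\<lambda>\<beta>. probit_post n x \<beta> *
            (a \<bullet> (- (1/2) *\<^sub>R grad (\<lambda>b. ln (probit_post n x b)) \<beta>)))
     \<and> (\<integral>\<beta>. probit_post n x \<beta> *
            (a \<bullet> (- (1/2) *\<^sub>R grad (\<lambda>b. ln (probit_post n x b)) \<beta>)) \<partial>lborel) = 0"
proof -
  obtain c where cpos: "0 < c" and H0: "\<forall>\<beta>. \<exists>i<n. x i \<bullet> \<beta> \<le> - c * norm \<beta>"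
    using decay_dir[OF uniq] by blast
  have H: "\<And>\<beta>. \<exists>i<n. x i \<bullet> \<beta> \<le> - c * norm \<beta>" using H0 by blast
  let ?L = "probit_lik n x"
  define Z where "Z = (\<integral>b. ?L b \<partial>lborel)"
  have Lint: "integrable lborel ?L" by (rule lik_int[OF cpos H])
  have Zpos: "0 < Z"
  proof -
    have "0 \<le> Z" unfolding Z_def by (intro integral_nonneg_AE) (simp add: lik_nonneg)
    moreover have "Z \<noteq> 0"
    proof
      assume "Z = 0"
      then have "AE b in lborel. ?L b = 0"
      proof -
        have "AE b in lborel. 0 \<le> ?L b" by (simp add: lik_nonneg)
        then show ?thesis using integral_nonneg_eq_0_iff_AE[OF Lint] \<open>Z = 0\<close> unfolding Z_def by simp
      qed
      then have "AE b::real^'d in lborel. False" using lik_pos[of n x] by (simp add: less_le)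
      then have "ae_filter (lborel :: (real^'d) measure) = bot" using trivial_limit_def by blast
      then show False unfolding ae_filter_eq_bot_iff by simp
    qed
    ultimately show ?thesis by simp
  qed
  have post: "probit_post n x b = ?L b / Z" for b unfolding probit_post_def Z_def ..
  have gd: "GDERIV (\<lambda>b. ln (probit_post n x b)) \<beta> :> (1 / ?L \<beta>) *\<^sub>R Dlik n x \<beta>" for \<beta>
  proof -
    have "DERIV (\<lambda>y. ln (y / Z)) (?L \<beta>) :> 1 / ?L \<beta>"
      using lik_pos[of n x \<beta>] Zpos by (auto intro!: derivative_eq_intros simp: field_simps)
    from GDERIV_DERIV_compose[OF lik_gderiv this] show ?thesis unfolding post .
  qed
  have integrand: "probit_post n x \<beta> * (a \<bullet> (- (1/2) *\<^sub>R grad (\<lambda>b. ln (probit_post n x b)) \<beta>))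
      = (- 1 / (2 * Z)) * (a \<bullet> Dlik n x \<beta>)" for \<beta>
  proof -
    have g: "grad (\<lambda>b. ln (probit_post n x b)) \<beta> = (1 / ?L \<beta>) *\<^sub>R Dlik n x \<beta>" by (rule grad_eq[OF gd])
    show ?thesis unfolding g unfolding post using lik_pos[of n x \<beta>] Zpos
    by (simp add: inner_scaleR_right field_simps)
  qed
  have zi: "integrable lborel (\<lambda>\<beta>. a \<bullet> Dlik n x \<beta>)" "(\<integral>\<beta>. a \<bullet> Dlik n x \<beta> \<partial>lborel) = 0"
    using zero_int[OF cpos H, of a] by auto
  define k where "k = c\<^sup>2 / 2"
  have kpos: "0 < k" unfolding k_def using cpos by simp
  define V where "V = measure lborel (ball (0::real^'d) 1 - {0})"
  have sph: "((\<lambda>\<rho>. sphere_integral \<rho> (\<lambda>\<beta>. probit_post n x \<beta> * (a \<bullet> (\<beta> /\<^sub>R norm \<beta>)))) \<longlongrightarrow> 0) at_top"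
  proof (rule Lim_null_comparison)
    let ?C = "norm a * 2 / Z * real DIM(real^'d) * V"
    show "((\<lambda>\<rho>. ?C * (\<rho> ^ (DIM(real^'d) - 1) * exp (- k * \<rho>^2))) \<longlongrightarrow> 0) at_top"
      by (rule tendsto_mult_right_zero[OF rho_lim[OF kpos]])
    show "\<forall>\<^sub>F \<rho> in at_top. norm (sphere_integral \<rho> (\<lambda>\<beta>. probit_post n x \<beta> * (a \<bullet> (\<beta> /\<^sub>R norm \<beta>))))
        \<le> ?C * (\<rho> ^ (DIM(real^'d) - 1) * exp (- k * \<rho>^2))"
    proof (rule eventually_mono[OF eventually_gt_at_top[of 0]])
      fix \<rho> :: real assume rho: "0 < \<rho>"
      define B where "B = norm a * (2 * exp (- k * \<rho>^2)) / Z"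
      have B: "0 \<le> B" unfolding B_def using Zpos by simp
      have fb: "\<bar>probit_post n x z * (a \<bullet> (z /\<^sub>R norm z))\<bar> \<le> B" if "norm z = \<rho>" for z
      proof -
        have "\<bar>a \<bullet> (z /\<^sub>R norm z)\<bar> \<le> norm a * norm (z /\<^sub>R norm z)" by (rule Cauchy_Schwarz_ineq2)
        also have "norm (z /\<^sub>R norm z) \<le> 1" by (cases "z = 0") simp_all
        then have "norm a * norm (z /\<^sub>R norm z) \<le> norm a" by (rule mult_right_le_one_le[rotated 2]) auto
        finally have ia: "\<bar>a \<bullet> (z /\<^sub>R norm z)\<bar> \<le> norm a" .
        have pz: "0 \<le> probit_post n x z" "probit_post n x z \<le> 2 * exp (- k * \<rho>^2) / Z"
          unfolding post using lik_nonneg[of n x z] Zpos lik_le[OF cpos H, of z] that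
          by (auto simp: k_def divide_right_mono)
        have "\<bar>probit_post n x z * (a \<bullet> (z /\<^sub>R norm z))\<bar> = probit_post n x z * \<bar>a \<bullet> (z /\<^sub>R norm z)\<bar>"
          using pz by (simp add: abs_mult)
        also have "\<dots> \<le> (2 * exp (- k * \<rho>^2) / Z) * norm a"
          using pz ia by (intro mult_mono) auto
        also have "\<dots> = B" unfolding B_def by simp
        finally show ?thesis .
      qed
      have "\<bar>sphere_integral \<rho> (\<lambda>\<beta>. probit_post n x \<beta> * (a \<bullet> (\<beta> /\<^sub>R norm \<beta>)))\<bar>
          \<le> B * (real DIM(real^'d) * \<rho> ^ (DIM(real^'d) - 1)) * V"
        unfolding V_def by (rule sphere_bound[OF rho B fb])
      also have "\<dots> = ?C * (\<rho> ^ (DIM(real^'d) - 1) * exp (- k * \<rho>^2))"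
        unfolding B_def by (simp add: field_simps)
      finally show "norm (sphere_integral \<rho> (\<lambda>\<beta>. probit_post n x \<beta> * (a \<bullet> (\<beta> /\<^sub>R norm \<beta>))))
        \<le> ?C * (\<rho> ^ (DIM(real^'d) - 1) * exp (- k * \<rho>^2))" by simp
    qed
  qed
  have eqf: "(\<lambda>\<beta>. probit_post n x \<beta> * (a \<bullet> (- (1/2) *\<^sub>R grad (\<lambda>b. ln (probit_post n x b)) \<beta>)))
      = (\<lambda>\<beta>. (- 1 / (2 * Z)) * (a \<bullet> Dlik n x \<beta>))"
    by (rule ext) (rule integrand)
  show ?thesis
  proof (intro conjI)
    show "\<forall>\<beta>. \<exists>D. GDERIV (\<lambda>b. ln (probit_post n x b)) \<beta> :> D" using gd by blast
    show "integrable lborel (\<lambda>\<beta>. probit_post n x \<beta> *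
            (a \<bullet> (- (1/2) *\<^sub>R grad (\<lambda>b. ln (probit_post n x b)) \<beta>)))"
      unfolding eqf using zi(1) by (rule integrable_mult_right)
    show "(\<integral>\<beta>. probit_post n x \<beta> *
            (a \<bullet> (- (1/2) *\<^sub>R grad (\<lambda>b. ln (probit_post n x b)) \<beta>)) \<partial>lborel) = 0"
      unfolding eqf using zi(2) by simp
  qed (use Lint sph in auto)
qed


end
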